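(* Let $J>h>0$ and $\sigma\in\mathcal X$. (i) If some cluster or plus strip of $\sigma$ has an internal angle $\frac53\pi$ or an internal angle $\frac13\pi$, then $V_\sigma=0$; in particular $\sigma\notin\mathcal X_0$. (ii) If some cluster or plus strip of $\sigma$ has an internal angle $\frac43\pi$, then $V_\sigma\le J-h$; in particular $\sigma\notin\mathcal X_{J-h}$.
   Context: Let $\mathbb{T}^2$ denote the triangular lattice embedded in $\mathbb{R}^2$ and $\mathbb{H}^2$ its dual, the hexagonal lattice; each vertex $i$ of $\mathbb{H}^2$ is the centre of a unique closed triangular face of $\mathbb{T}^2$ (the face centred at $i$), and $d$ denotes the graph distance on $\mathbb{H}^2$, so $d(i,j)=1$ iff the faces centred at $i$ and $j$ share an edge. Fix an integer $L\ge1$ and let $\Lambda\subset\mathbb{H}^2$ be the set of sites in a parallelogram of side length $L$ cut along two coordinate axes of $\mathbb{T}^2$, with periodic boundary conditions; thus $\Lambda$ is a discrete torus with $|\Lambda|=2L^2$ sites, each having 3 nearest neighbours. Let $\mathcal X=\{-1,+1\}^\Lambda$ and let $\underline{+1}$, $\underline{-1}$ be the configurations with all spins $+1$, resp. $-1$. For $J,h>0$ the Hamiltonian is $H(\sigma)=-\frac J2\sum_{\{i,j\}\subset\Lambda:\,d(i,j)=1}\sigma(i)\sigma(j)-\frac h2\sum_{i\in\Lambda}\sigma(i)$ (sum over unordered nearest-neighbour pairs), so that $H(\sigma)-H(\underline{-1})=J|\gamma(\sigma)|-hN^+(\sigma)$, where $|\gamma(\sigma)|$ is the number of nearest-neighbour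 pairs carrying opposite spins and $N^+(\sigma)$ is the number of sites with spin $+1$. For $x\in\Lambda$, $\sigma^{(x)}$ denotes $\sigma$ with the spin at $x$ reversed. Metastability notions: a path is a finite sequence $(\omega_1,\dots,\omega_n)$ in $\mathcal X$ with each $\omega_{k+1}=\omega_k^{(x)}$ for some $x\in\Lambda$; $\Theta(\sigma,\eta)$ is the set of paths from $\sigma$ to $\eta$; $\Phi(\sigma,\eta)=\min_{\omega\in\Theta(\sigma,\eta)}\max_{\zeta\in\omega}H(\zeta)$ and $\Phi(A,B)=\min_{\sigma\in A,\eta\in B}\Phi(\sigma,\eta)$. $\mathcal I_\sigma=\{\eta: H(\eta)<H(\sigma)\}$; the stability level is $V_\sigma=\Phi(\sigma,\mathcal I_\sigma)-H(\sigma)$ ($V_\sigma=\infty$ if $\mathcal I_\sigma=\emptyset$); $\mathcal X_V=\{\sigma\in\mathcal X: V_\sigma>V\}$. Clusters: for $\sigma\in\mathcal X$ let $C(\sigma)$ be the union (on the torus) of the closed faces centred at the sites $i$ with $\sigma(i)=+1$. A maximal connected component of $C(\sigma)$ is called a plus strip if it wraps around the torus and a cluster otherwise. A cluster or plus strip $C$ has an internal angle $k\pi/3$ ($k\in\{1,\dots,5\}$) at a vertex $v$ of $\mathbb T^2$ if exactly $k$ of the six faces of $\mathbb T^2$ incident to $v$ belong to $C$ and these $k$ faces are consecutive in the cyclic order around $v$. *)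

theory Defs
  imports Complex_Main "HOL-Library.Extended_Real"
begin

text \<open>Sites of the hexagonal lattice = triangular faces of the triangular lattice.
  A face is (a,b,True) = up-triangle with vertices (a,b),(a+1,b),(a,b+1) and
  (a,b,False) = down-triangle with vertices (a+1,b),(a,b+1),(a+1,b+1), in the
  basis e1=(1,0), e2=(1/2,sqrt 3/2). Coordinates are taken modulo L (torus).\<close>

type_synonym site = "int \<times> int \<times> bool"
type_synonym vertex = "int \<times> int"
type_synonym config = "site \<Rightarrow> int"

definition wrap :: "nat \<Rightarrow> site \<Rightarrow> site" where
  "wrap L x = (case x of (a, b, u) \<Rightarrow> (a mod int L, b mod int L, u))"

definition wrapv :: "nat \<Rightarrow> vertex \<Rightarrow> vertex" where
  "wrapv L v = (case v of (a, b) \<Rightarrow> (a mod int L, b mod int L))"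

definition Lam :: "nat \<Rightarrow> site set" where
  "Lam L = {(a, b, u). 0 \<le> a \<and> a < int L \<and> 0 \<le> b \<and> b < int L}"

definition Verts :: "nat \<Rightarrow> vertex set" where
  "Verts L = {(a, b). 0 \<le> a \<and> a < int L \<and> 0 \<le> b \<and> b < int L}"

definition face_verts :: "nat \<Rightarrow> site \<Rightarrow> vertex set" where
  "face_verts L x = (case x of (a, b, u) \<Rightarrow>
     (if u then wrapv L ` {(a, b), (a + 1, b), (a, b + 1)}
      else wrapv L ` {(a + 1, b), (a, b + 1), (a + 1, b + 1)}))"

text \<open>Nearest neighbours (d(i,j)=1): the faces sharing an edge with a given face.\<close>
definition nbrs :: "nat \<Rightarrow> site \<Rightarrow> site set" where
  "nbrs L x = (case x of (a, b, u) \<Rightarrow>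
     (if u then wrap L ` {(a, b, False), (a - 1, b, False), (a, b - 1, False)}
      else wrap L ` {(a, b, True), (a + 1, b, True), (a, b + 1, True)}))"

definition adj :: "nat \<Rightarrow> site \<Rightarrow> site \<Rightarrow> bool" where
  "adj L x y \<longleftrightarrow> x \<in> Lam L \<and> y \<in> Lam L \<and> y \<in> nbrs L x"

definition nn_pairs :: "nat \<Rightarrow> site set set" where
  "nn_pairs L = {{x, y} | x y. adj L x y}"

text \<open>Configuration space: spins in {-1,+1} on Lambda, fixed to 1 outside (irrelevant).\<close>
definition Xs :: "nat \<Rightarrow> config set" where
  "Xs L = {\<sigma>. (\<forall>x\<in>Lam L. \<sigma> x = 1 \<or> \<sigma> x = -1) \<and> (\<forall>x. x \<notin> Lam L \<longrightarrow> \<sigma> x = 1)}"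

definition plus_conf :: "nat \<Rightarrow> config" where
  "plus_conf L = (\<lambda>x. 1)"

definition minus_conf :: "nat \<Rightarrow> config" where
  "minus_conf L = (\<lambda>x. if x \<in> Lam L then -1 else 1)"

definition Ham :: "nat \<Rightarrow> real \<Rightarrow> real \<Rightarrow> config \<Rightarrow> real" where
  "Ham L J h \<sigma> = - (J / 2) * (\<Sum>e\<in>nn_pairs L. (\<Prod>x\<in>e. real_of_int (\<sigma> x)))
                 - (h / 2) * (\<Sum>x\<in>Lam L. real_of_int (\<sigma> x))"

definition flip :: "config \<Rightarrow> site \<Rightarrow> config" where
  "flip \<sigma> x = \<sigma>(x := - \<sigma> x)"

definition is_path :: "nat \<Rightarrow> config list \<Rightarrow> bool" where
  "is_path L \<omega> \<longleftrightarrow> \<omega> \<noteq> [] \<and>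
     (\<forall>k. Suc k < length \<omega> \<longrightarrow> (\<exists>x\<in>Lam L. \<omega> ! Suc k = flip (\<omega> ! k) x))"

definition Theta :: "nat \<Rightarrow> config \<Rightarrow> config \<Rightarrow> config list set" where
  "Theta L \<sigma> \<eta> = {\<omega>. is_path L \<omega> \<and> hd \<omega> = \<sigma> \<and> last \<omega> = \<eta>}"

definition Phi :: "nat \<Rightarrow> real \<Rightarrow> real \<Rightarrow> config \<Rightarrow> config \<Rightarrow> real" where
  "Phi L J h \<sigma> \<eta> = Min {Max (Ham L J h ` set \<omega>) | \<omega>. \<omega> \<in> Theta L \<sigma> \<eta>}"

definition PhiSet :: "nat \<Rightarrow> real \<Rightarrow> real \<Rightarrow> config set \<Rightarrow> config set \<Rightarrow> real" where
  "PhiSet L J h A B = Min {Phi L J h \<sigma> \<eta> | \<sigma> \<eta>. \<sigma> \<in> A \<and> \<eta> \<in> B}"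

definition Iset :: "nat \<Rightarrow> real \<Rightarrow> real \<Rightarrow> config \<Rightarrow> config set" where
  "Iset L J h \<sigma> = {\<eta> \<in> Xs L. Ham L J h \<eta> < Ham L J h \<sigma>}"

definition stab :: "nat \<Rightarrow> real \<Rightarrow> real \<Rightarrow> config \<Rightarrow> ereal" where
  "stab L J h \<sigma> = (if Iset L J h \<sigma> = {} then \<infinity>
      else ereal (PhiSet L J h {\<sigma>} (Iset L J h \<sigma>) - Ham L J h \<sigma>))"

definition Xabove :: "nat \<Rightarrow> real \<Rightarrow> real \<Rightarrow> real \<Rightarrow> config set" where
  "Xabove L J h V = {\<sigma> \<in> Xs L. stab L J h \<sigma> > ereal V}"

text \<open>Clusters and plus strips: maximal connected components of the union of the
  closed faces centred at plus sites. Two closed faces of the (torus) triangulation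
  intersect iff they share a vertex, so components are the classes of the
  vertex-sharing relation restricted to plus sites.\<close>
definition plus_sites :: "nat \<Rightarrow> config \<Rightarrow> site set" where
  "plus_sites L \<sigma> = {x \<in> Lam L. \<sigma> x = 1}"

definition touch_rel :: "nat \<Rightarrow> config \<Rightarrow> (site \<times> site) set" where
  "touch_rel L \<sigma> = {(x, y). x \<in> plus_sites L \<sigma> \<and> y \<in> plus_sites L \<sigma> \<and>
                      face_verts L x \<inter> face_verts L y \<noteq> {}}"

definition components :: "nat \<Rightarrow> config \<Rightarrow> site set set" where
  "components L \<sigma> = {{y. (x, y) \<in> (touch_rel L \<sigma>)\<^sup>*} | x. x \<in> plus_sites L \<sigma>}"

text \<open>The six faces around vertex (a,b), in cyclic (counterclockwise) order.\<close>
definition face_around :: "nat \<Rightarrow> vertex \<Rightarrow> nat \<Rightarrow> site" where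
  "face_around L v i = (case v of (a, b) \<Rightarrow>
     [wrap L (a, b, True), wrap L (a - 1, b, False), wrap L (a - 1, b, True),
      wrap L (a - 1, b - 1, False), wrap L (a, b - 1, True), wrap L (a, b - 1, False)] ! i)"

text \<open>C has internal angle k*pi/3 at vertex v: exactly k of the six incident faces
  belong to C and they are consecutive in the cyclic order.\<close>
definition has_angle :: "nat \<Rightarrow> site set \<Rightarrow> vertex \<Rightarrow> nat \<Rightarrow> bool" where
  "has_angle L C v k \<longleftrightarrow> v \<in> Verts L \<and> 1 \<le> k \<and> k \<le> 5 \<and>
     (let S = {i \<in> {0..<6}. face_around L v i \<in> C} in
        card S = k \<and> (\<exists>s<6. S = (\<lambda>j. (s + j) mod 6) ` {0..<k}))"

end

theory Submission
  imports Defs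
begin


lemma wrap_in_Lam: "L \<ge> 1 \<Longrightarrow> wrap L x \<in> Lam L"
  by (cases x) (auto simp: wrap_def Lam_def)

lemma wrap_Lam: "x \<in> Lam L \<Longrightarrow> wrap L x = x"
  by (cases x) (auto simp: wrap_def Lam_def)

lemma wrap_wrap: "wrap L (wrap L x) = wrap L x"
  by (cases x) (auto simp: wrap_def)

lemma nbrs_wrap: "nbrs L (wrap L x) = nbrs L x"
  by (cases x) (auto simp: wrap_def nbrs_def mod_simps)

lemma nbrs_sym: "y \<in> nbrs L x \<Longrightarrow> wrap L x \<in> nbrs L y"
proof -
  assume y: "y \<in> nbrs L x"
  obtain a b u where x: "x = (a,b,u)" by (cases x) auto
  show ?thesis
  proof (cases u)
    case True
    then have "y = wrap L (a,b,False) \<or> y = wrap L (a-1,b,False) \<or> y = wrap L (a,b-1,False)"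
      using y x by (auto simp: nbrs_def)
    then show ?thesis using x True
      by (auto simp: nbrs_wrap) (auto simp: nbrs_def)
  next
    case False
    then have "y = wrap L (a,b,True) \<or> y = wrap L (a+1,b,True) \<or> y = wrap L (a,b+1,True)"
      using y x by (auto simp: nbrs_def)
    then show ?thesis using x False
      by (auto simp: nbrs_wrap) (auto simp: nbrs_def)
  qed
qed

lemma nbrs_ne: "y \<in> nbrs L x \<Longrightarrow> snd (snd y) \<noteq> snd (snd x)"
  by (cases x) (auto simp: nbrs_def wrap_def)

lemma nbrs_Lam: "L \<ge> 1 \<Longrightarrow> nbrs L x \<subseteq> Lam L"
  by (cases x) (auto simp: nbrs_def wrap_in_Lam)

lemma nbrs_finite: "finite (nbrs L x)"
  by (cases x) (auto simp: nbrs_def)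

lemma card_nbrs: "card (nbrs L x) \<le> 3"
proof -
  obtain a b u where x: "x = (a,b,u)" by (cases x) auto
  show ?thesis unfolding x nbrs_def
    by (auto intro!: order.trans[OF card_image_le] card_insert_le_m1)
qed

lemma nbrs_L1: "y \<in> nbrs 1 x \<Longrightarrow> z \<in> nbrs 1 x \<Longrightarrow> y = z"
  by (cases x) (auto simp: nbrs_def wrap_def split: if_splits)

lemma fa_cases: "(i::nat) < 6 \<Longrightarrow> i = 0 \<or> i = 1 \<or> i = 2 \<or> i = 3 \<or> i = 4 \<or> i = 5"
  by auto

lemma fa_Lam: "L \<ge> 1 \<Longrightarrow> i < 6 \<Longrightarrow> face_around L v i \<in> Lam L"
  by (cases v, drule fa_cases) (auto simp: face_around_def wrap_in_Lam)

lemma fa_adj1: "i < 6 \<Longrightarrow> face_around L v ((i+1) mod 6) \<in> nbrs L (face_around L v i)"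
  by (cases v, drule fa_cases) (auto simp: face_around_def nbrs_wrap, auto simp: nbrs_def)

lemma fa_adj: "i < 6 \<Longrightarrow> face_around L v ((i+1) mod 6) \<in> nbrs L (face_around L v i)
   \<and> face_around L v i \<in> nbrs L (face_around L v ((i+1) mod 6))"
proof
  assume i: "i < 6"
  show 1: "face_around L v ((i+1) mod 6) \<in> nbrs L (face_around L v i)" using fa_adj1[OF i] .
  have "wrap L (face_around L v i) = face_around L v i"
    using i by (cases v) (auto dest!: fa_cases simp: face_around_def wrap_wrap)
  then show "face_around L v i \<in> nbrs L (face_around L v ((i+1) mod 6))"
    using nbrs_sym[OF 1] by simp
qed

lemma mod_shift1: "(a::int) mod int L = (a - 1) mod int L \<Longrightarrow> L = 1"
proof -
  assume "(a::int) mod int L = (a - 1) mod int L"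
  then have "int L dvd (a - (a - 1))" by (simp add: mod_eq_dvd_iff)
  then show "L = 1" by simp
qed

lemma mod_shift1': "((a::int) - 1) mod int L = a mod int L \<Longrightarrow> L = 1"
  using mod_shift1[OF sym] by blast

lemma fa_dist2: "i < 6 \<Longrightarrow> face_around L v i = face_around L v ((i+2) mod 6) \<Longrightarrow> L = 1"
  by (cases v, drule fa_cases)
    (auto simp: face_around_def wrap_def, (metis mod_shift1 mod_shift1' One_nat_def)+)

lemma face_verts_wrap: "face_verts L (wrap L x) = face_verts L x"
  by (cases x) (auto simp: wrap_def face_verts_def wrapv_def mod_simps)

lemma fa_vert: "v \<in> Verts L \<Longrightarrow> i < 6 \<Longrightarrow> v \<in> face_verts L (face_around L v i)"
  by (cases v, drule fa_cases)
     (auto simp: face_around_def face_verts_wrap, auto simp: face_verts_def wrapv_def Verts_def)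



lemma Lam_finite: "finite (Lam L)"
proof -
  have "Lam L \<subseteq> {0..<int L} \<times> {0..<int L} \<times> UNIV" by (auto simp: Lam_def)
  then show ?thesis by (rule finite_subset) auto
qed

lemma Xs_finite: "finite (Xs L)"
proof -
  have "Xs L \<subseteq> {f. \<forall>x. (x \<in> Lam L \<longrightarrow> f x \<in> {1,-1}) \<and> (x \<notin> Lam L \<longrightarrow> f x = 1)}"
    by (auto simp: Xs_def)
  then show ?thesis
    by (rule finite_subset) (rule finite_set_of_finite_funs[OF Lam_finite], simp)
qed

lemma flip_Xs: "\<sigma> \<in> Xs L \<Longrightarrow> x \<in> Lam L \<Longrightarrow> flip \<sigma> x \<in> Xs L"
  by (auto simp: Xs_def flip_def)

lemma path_Xs: "is_path L \<omega> \<Longrightarrow> hd \<omega> \<in> Xs L \<Longrightarrow> k < length \<omega> \<Longrightarrow> \<omega> ! k \<in> Xs L"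
proof (induction k)
  case 0
  then show ?case by (simp add: hd_conv_nth is_path_def)
next
  case (Suc k)
  then obtain x where "x \<in> Lam L" "\<omega> ! Suc k = flip (\<omega> ! k) x" unfolding is_path_def by blast
  then show ?case using Suc by (simp add: flip_Xs)
qed

lemma path_set_Xs: "is_path L \<omega> \<Longrightarrow> hd \<omega> \<in> Xs L \<Longrightarrow> set \<omega> \<subseteq> Xs L"
  by (auto simp: in_set_conv_nth intro: path_Xs)

lemma path_exists_aux:
  "\<forall>\<sigma>. \<sigma> \<in> Xs L \<longrightarrow> \<eta> \<in> Xs L \<longrightarrow> card {x \<in> Lam L. \<sigma> x \<noteq> \<eta> x} = n \<longrightarrow> Theta L \<sigma> \<eta> \<noteq> {}"
proof (induction n)
  case 0
  show ?case
  proof (intro allI impI)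
    fix \<sigma> assume s: "\<sigma> \<in> Xs L" and e: "\<eta> \<in> Xs L" and c: "card {x \<in> Lam L. \<sigma> x \<noteq> \<eta> x} = 0"
    have "{x \<in> Lam L. \<sigma> x \<noteq> \<eta> x} = {}" using c Lam_finite by simp
    then have "\<sigma> = \<eta>"
    proof -
      assume em: "{x \<in> Lam L. \<sigma> x \<noteq> \<eta> x} = {}"
      show ?thesis
      proof
        fix y show "\<sigma> y = \<eta> y"
        proof -
          have a: "\<forall>x\<in>Lam L. \<sigma> x = \<eta> x" using em by blast
          have b: "\<forall>x. x \<notin> Lam L \<longrightarrow> \<sigma> x = 1" "\<forall>x. x \<notin> Lam L \<longrightarrow> \<eta> x = 1"
            using s e unfolding Xs_def by blast+
          show ?thesis
          proof (cases "y \<in> Lam L")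
            case True then show ?thesis using a by blast
          next
            case False then show ?thesis using b(1)[rule_format, OF False] b(2)[rule_format, OF False] by simp
          qed
        qed
      qed
    qed
    then have "[\<sigma>] \<in> Theta L \<sigma> \<eta>" by (simp add: Theta_def is_path_def)
    then show "Theta L \<sigma> \<eta> \<noteq> {}" by blast
  qed
next
  case (Suc n)
  show ?case
  proof (intro allI impI)
    fix \<sigma> assume s: "\<sigma> \<in> Xs L" and e: "\<eta> \<in> Xs L" and c: "card {x \<in> Lam L. \<sigma> x \<noteq> \<eta> x} = Suc n"
    have "{x \<in> Lam L. \<sigma> x \<noteq> \<eta> x} \<noteq> {}" using c by (metis card.empty nat.distinct(1))
    then obtain x where x: "x \<in> Lam L" "\<sigma> x \<noteq> \<eta> x" by blast
    define \<sigma>' where "\<sigma>' = flip \<sigma> x"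
    have s': "\<sigma>' \<in> Xs L" using s x by (simp add: \<sigma>'_def flip_Xs)
    have "\<sigma> x = 1 \<or> \<sigma> x = -1" "\<eta> x = 1 \<or> \<eta> x = -1" using s e x(1) unfolding Xs_def by blast+
    then have "\<eta> x = - \<sigma> x" using x(2) by auto
    then have "{y \<in> Lam L. \<sigma>' y \<noteq> \<eta> y} = {y \<in> Lam L. \<sigma> y \<noteq> \<eta> y} - {x}"
      by (auto simp: \<sigma>'_def flip_def)
    then have "card {y \<in> Lam L. \<sigma>' y \<noteq> \<eta> y} = n" using c x Lam_finite by simp
    then obtain \<omega> where w: "\<omega> \<in> Theta L \<sigma>' \<eta>" using Suc.IH s' e by blast
    have "\<sigma> # \<omega> \<in> Theta L \<sigma> \<eta>"
      unfolding Theta_def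
    proof (intro CollectI conjI)
      show "is_path L (\<sigma> # \<omega>)" unfolding is_path_def
      proof (intro conjI allI impI)
        fix k assume k: "Suc k < length (\<sigma> # \<omega>)"
        show "\<exists>x\<in>Lam L. (\<sigma> # \<omega>) ! Suc k = flip ((\<sigma> # \<omega>) ! k) x"
        proof (cases k)
          case 0
          then show ?thesis using w x by (auto simp: Theta_def is_path_def hd_conv_nth \<sigma>'_def)
        next
          case (Suc k')
          then show ?thesis using w k by (auto simp: Theta_def is_path_def)
        qed
      qed simp
      show "hd (\<sigma> # \<omega>) = \<sigma>" by simp
      show "last (\<sigma> # \<omega>) = \<eta>" using w by (auto simp: Theta_def is_path_def)
    qed
    then show "Theta L \<sigma> \<eta> \<noteq> {}" by blast
  qed
qed

lemma path_exists: "\<sigma> \<in> Xs L \<Longrightarrow> \<eta> \<in> Xs L \<Longrightarrow> Theta L \<sigma> \<eta> \<noteq> {}"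
  using path_exists_aux by blast

lemma Phi_set_props:
  fixes J h :: real
  assumes "\<sigma> \<in> Xs L" "\<eta> \<in> Xs L"
  defines "S \<equiv> {Max (Ham L J h ` set \<omega>) | \<omega>. \<omega> \<in> Theta L \<sigma> \<eta>}"
  shows "finite S" "S \<noteq> {}" "S \<subseteq> Ham L J h ` Xs L" "\<forall>v\<in>S. Ham L J h \<sigma> \<le> v"
proof -
  have A: "\<And>\<omega>. \<omega> \<in> Theta L \<sigma> \<eta> \<Longrightarrow> Max (Ham L J h ` set \<omega>) \<in> Ham L J h ` Xs L
     \<and> Ham L J h \<sigma> \<le> Max (Ham L J h ` set \<omega>)"
  proof -
    fix \<omega> assume w: "\<omega> \<in> Theta L \<sigma> \<eta>"
    then have p: "is_path L \<omega>" "hd \<omega> = \<sigma>" by (auto simp: Theta_def)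
    then have ne: "\<omega> \<noteq> []" by (simp add: is_path_def)
    have sub: "set \<omega> \<subseteq> Xs L" using path_set_Xs p assms(1) by simp
    have "Max (Ham L J h ` set \<omega>) \<in> Ham L J h ` set \<omega>" using ne by (intro Max_in) auto
    moreover have "\<sigma> \<in> set \<omega>" using p ne by (metis list.set_sel(1))
    ultimately show "?thesis \<omega>" using sub by auto
  qed
  show "S \<subseteq> Ham L J h ` Xs L" using A unfolding S_def by blast
  then show "finite S" using Xs_finite finite_subset by blast
  show "S \<noteq> {}" using path_exists[OF assms(1,2)] unfolding S_def by blast
  show "\<forall>v\<in>S. Ham L J h \<sigma> \<le> v" using A unfolding S_def by blast
qed

lemma Phi_props:
  assumes "\<sigma> \<in> Xs L" "\<eta> \<in> Xs L"
  shows "Phi L J h \<sigma> \<eta> \<in> Ham L J h ` Xs L" "Ham L J h \<sigma> \<le> Phi L J h \<sigma> \<eta>"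
    "\<And>\<omega>. \<omega> \<in> Theta L \<sigma> \<eta> \<Longrightarrow> Phi L J h \<sigma> \<eta> \<le> Max (Ham L J h ` set \<omega>)"
proof -
  note P = Phi_set_props[OF assms, of J h]
  let ?S = "{Max (Ham L J h ` set \<omega>) | \<omega>. \<omega> \<in> Theta L \<sigma> \<eta>}"
  have "Min ?S \<in> ?S" using P by (intro Min_in) auto
  then show "Phi L J h \<sigma> \<eta> \<in> Ham L J h ` Xs L" "Ham L J h \<sigma> \<le> Phi L J h \<sigma> \<eta>"
    using P unfolding Phi_def by auto
  fix \<omega> assume "\<omega> \<in> Theta L \<sigma> \<eta>"
  then show "Phi L J h \<sigma> \<eta> \<le> Max (Ham L J h ` set \<omega>)"
    unfolding Phi_def using P by (intro Min_le) auto
qed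



lemma nn_finite: "finite (nn_pairs L)"
proof -
  have "nn_pairs L \<subseteq> (\<lambda>(x,y). {x,y}) ` (Lam L \<times> Lam L)"
    by (auto simp: nn_pairs_def adj_def)
  then show ?thesis using Lam_finite finite_subset by blast
qed

lemma nbrs_not_self: "y \<in> nbrs L x \<Longrightarrow> y \<noteq> x"
  using nbrs_ne by blast

lemma pairs_x:
  assumes L: "L \<ge> 1" and x: "x \<in> Lam L"
  shows "{e \<in> nn_pairs L. x \<in> e} = (\<lambda>y. {x,y}) ` nbrs L x"
proof
  show "{e \<in> nn_pairs L. x \<in> e} \<subseteq> (\<lambda>y. {x,y}) ` nbrs L x"
  proof
    fix e assume "e \<in> {e \<in> nn_pairs L. x \<in> e}"
    then obtain p q where e: "e = {p,q}" "adj L p q" "x \<in> e" by (auto simp: nn_pairs_def)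
    then have pq: "p \<in> Lam L" "q \<in> Lam L" "q \<in> nbrs L p" by (auto simp: adj_def)
    show "e \<in> (\<lambda>y. {x,y}) ` nbrs L x"
    proof (cases "x = p")
      case True then show ?thesis using e pq by auto
    next
      case False
      then have "x = q" using e by auto
      moreover have "wrap L p \<in> nbrs L q" using nbrs_sym[OF pq(3)] .
      then have "p \<in> nbrs L q" using wrap_Lam[OF pq(1)] by simp
      ultimately show ?thesis using e by auto
    qed
  qed
next
  show "(\<lambda>y. {x,y}) ` nbrs L x \<subseteq> {e \<in> nn_pairs L. x \<in> e}"
  proof
    fix e assume "e \<in> (\<lambda>y. {x,y}) ` nbrs L x"
    then obtain y where y: "y \<in> nbrs L x" "e = {x,y}" by blast
    then have "adj L x y" using nbrs_Lam[OF L] x unfolding adj_def by blast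
    then have "{x,y} \<in> nn_pairs L" unfolding nn_pairs_def by blast
    then show "e \<in> {e \<in> nn_pairs L. x \<in> e}" using y by simp
  qed
qed

lemma Ham_flip:
  assumes L: "L \<ge> 1" and x: "x \<in> Lam L"
  shows "Ham L J h (flip \<sigma> x) = Ham L J h \<sigma>
     + real_of_int (\<sigma> x) * (J * (\<Sum>y\<in>nbrs L x. real_of_int (\<sigma> y)) + h)"
proof -
  define \<sigma>' where "\<sigma>' = flip \<sigma> x"
  define P where "P = nn_pairs L"
  define Px where "Px = {e \<in> P. x \<in> e}"
  define g :: "config \<Rightarrow> site set \<Rightarrow> real" where "g = (\<lambda>\<tau> e. \<Prod>z\<in>e. real_of_int (\<tau> z))"
  have fP: "finite P" using nn_finite P_def by simp
  have PxP: "Px \<subseteq> P" by (auto simp: Px_def)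
  have split: "\<And>\<tau>. (\<Sum>e\<in>P. g \<tau> e) = (\<Sum>e\<in>Px. g \<tau> e) + (\<Sum>e\<in>P - Px. g \<tau> e)"
    using fP PxP by (metis sum.subset_diff add.commute)
  have rest: "(\<Sum>e\<in>P - Px. g \<sigma>' e) = (\<Sum>e\<in>P - Px. g \<sigma> e)"
  proof (rule sum.cong)
    fix e assume "e \<in> P - Px"
    then have "x \<notin> e" by (auto simp: Px_def)
    then show "g \<sigma>' e = g \<sigma> e" unfolding g_def
      by (intro prod.cong) (auto simp: \<sigma>'_def flip_def)
  qed simp
  have Pxeq: "Px = (\<lambda>y. {x,y}) ` nbrs L x" using pairs_x[OF L x] by (simp add: Px_def P_def)
  have inj: "inj_on (\<lambda>y. {x,y}) (nbrs L x)"
    by (rule inj_onI) (auto simp: doubleton_eq_iff dest: nbrs_not_self)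
  have gx: "\<And>\<tau>. (\<Sum>e\<in>Px. g \<tau> e) = (\<Sum>y\<in>nbrs L x. real_of_int (\<tau> x) * real_of_int (\<tau> y))"
    unfolding Pxeq by (subst sum.reindex[OF inj]) (auto simp: g_def dest!: nbrs_not_self intro!: sum.cong)
  have sx: "\<And>y. y \<in> nbrs L x \<Longrightarrow> \<sigma>' y = \<sigma> y" by (auto simp: \<sigma>'_def flip_def dest: nbrs_not_self)
  have s'x: "\<sigma>' x = - \<sigma> x" by (simp add: \<sigma>'_def flip_def)
  have pairs': "(\<Sum>e\<in>P. g \<sigma>' e) = (\<Sum>e\<in>P. g \<sigma> e)
      - 2 * real_of_int (\<sigma> x) * (\<Sum>y\<in>nbrs L x. real_of_int (\<sigma> y))"
  proof -
    have "(\<Sum>e\<in>Px. g \<sigma>' e) = (\<Sum>y\<in>nbrs L x. - (real_of_int (\<sigma> x) * real_of_int (\<sigma> y)))"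
      unfolding gx using sx s'x by (intro sum.cong) auto
    also have "\<dots> = - (\<Sum>e\<in>Px. g \<sigma> e)" unfolding gx by (simp add: sum_negf)
    finally have "(\<Sum>e\<in>Px. g \<sigma>' e) = - (\<Sum>e\<in>Px. g \<sigma> e)" .
    moreover have "(\<Sum>e\<in>Px. g \<sigma> e) = real_of_int (\<sigma> x) * (\<Sum>y\<in>nbrs L x. real_of_int (\<sigma> y))"
      unfolding gx by (simp add: sum_distrib_left)
    ultimately show ?thesis using split[of \<sigma>] split[of \<sigma>'] rest by simp
  qed
  have lam: "(\<Sum>z\<in>Lam L. real_of_int (\<sigma>' z)) = (\<Sum>z\<in>Lam L. real_of_int (\<sigma> z)) - 2 * real_of_int (\<sigma> x)"
  proof -
    have a: "\<And>\<tau>. (\<Sum>z\<in>Lam L. real_of_int (\<tau> z)) = real_of_int (\<tau> x) + (\<Sum>z\<in>Lam L - {x}. real_of_int (\<tau> z))"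
      using x Lam_finite by (simp add: sum.remove)
    have b: "(\<Sum>z\<in>Lam L - {x}. real_of_int (\<sigma>' z)) = (\<Sum>z\<in>Lam L - {x}. real_of_int (\<sigma> z))"
      by (rule sum.cong) (auto simp: \<sigma>'_def flip_def)
    show ?thesis using a[of \<sigma>] a[of \<sigma>'] b s'x by simp
  qed
  have "Ham L J h \<sigma>' = - (J / 2) * (\<Sum>e\<in>P. g \<sigma>' e) - (h / 2) * (\<Sum>z\<in>Lam L. real_of_int (\<sigma>' z))"
    by (simp add: Ham_def P_def g_def)
  also have "\<dots> = Ham L J h \<sigma> + real_of_int (\<sigma> x) * (J * (\<Sum>y\<in>nbrs L x. real_of_int (\<sigma> y)) + h)"
    unfolding pairs' lam by (simp add: Ham_def P_def g_def algebra_simps)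
  finally show ?thesis by (simp add: \<sigma>'_def)
qed

lemma sum_lower:
  assumes "finite N" "A \<subseteq> N" "\<forall>y\<in>N. \<sigma> y = 1 \<or> \<sigma> y = -1" "\<forall>y\<in>A. \<sigma> y = 1"
  shows "(\<Sum>y\<in>N. real_of_int (\<sigma> y)) \<ge> 2 * real (card A) - real (card N)"
proof -
  have fA: "finite A" using assms(1,2) finite_subset by blast
  have "(\<Sum>y\<in>N. real_of_int (\<sigma> y)) = (\<Sum>y\<in>A. real_of_int (\<sigma> y)) + (\<Sum>y\<in>N - A. real_of_int (\<sigma> y))"
    using assms(1,2) by (metis sum.subset_diff add.commute)
  also have "(\<Sum>y\<in>A. real_of_int (\<sigma> y)) = real (card A)" using assms(4) by simp
  also have "(\<Sum>y\<in>N - A. real_of_int (\<sigma> y)) \<ge> (\<Sum>y\<in>N - A. -1)"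
    using assms(3) by (intro sum_mono) force
  moreover have "(\<Sum>y\<in>N - A. (-1::real)) = - real (card N - card A)"
    using assms(1,2) fA by (simp add: card_Diff_subset)
  moreover have "card A \<le> card N" using assms(1,2) card_mono by blast
  ultimately show ?thesis by (simp add: of_nat_diff)
qed

lemma sum_upper:
  assumes "finite N" "A \<subseteq> N" "\<forall>y\<in>N. \<sigma> y = 1 \<or> \<sigma> y = -1" "\<forall>y\<in>A. \<sigma> y = -1"
  shows "(\<Sum>y\<in>N. real_of_int (\<sigma> y)) \<le> real (card N) - 2 * real (card A)"
proof -
  have "(\<Sum>y\<in>N. real_of_int ((\<lambda>z. - \<sigma> z) y)) \<ge> 2 * real (card A) - real (card N)"
    using assms by (intro sum_lower) auto
  then show ?thesis by (simp add: sum_negf)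
qed



lemma path2: "x \<in> Lam L \<Longrightarrow> [\<sigma>, flip \<sigma> x] \<in> Theta L \<sigma> (flip \<sigma> x)"
  by (auto simp: Theta_def is_path_def less_Suc_eq)

lemma path3: "x \<in> Lam L \<Longrightarrow> z \<in> Lam L \<Longrightarrow>
   [\<sigma>, flip \<sigma> x, flip (flip \<sigma> x) z] \<in> Theta L \<sigma> (flip (flip \<sigma> x) z)"
  unfolding Theta_def is_path_def
  apply (intro CollectI conjI allI impI)
  apply simp_all
  subgoal for k by (cases k) (auto simp: less_Suc_eq)
  done

lemma PhiSet_facts:
  fixes J h :: real
  assumes s: "\<sigma> \<in> Xs L"
  defines "T \<equiv> {Phi L J h \<sigma>' \<eta>' | \<sigma>' \<eta>'. \<sigma>' \<in> {\<sigma>} \<and> \<eta>' \<in> Iset L J h \<sigma>}"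
  shows "finite T" "\<forall>t\<in>T. Ham L J h \<sigma> \<le> t"
proof -
  have "T \<subseteq> Ham L J h ` Xs L" unfolding T_def using Phi_props(1)[OF s] by (auto simp: Iset_def)
  then show "finite T" using Xs_finite finite_subset by blast
  show "\<forall>t\<in>T. Ham L J h \<sigma> \<le> t" unfolding T_def using Phi_props(2)[OF s] by (auto simp: Iset_def)
qed

lemma stab_zero:
  assumes s: "\<sigma> \<in> Xs L" and x: "x \<in> Lam L" and lt: "Ham L J h (flip \<sigma> x) < Ham L J h \<sigma>"
  shows "stab L J h \<sigma> = 0 \<and> \<sigma> \<notin> Xabove L J h 0"
proof -
  let ?\<eta> = "flip \<sigma> x"
  have e: "?\<eta> \<in> Xs L" using flip_Xs[OF s x] .
  then have eI: "?\<eta> \<in> Iset L J h \<sigma>" using lt by (simp add: Iset_def)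
  define T where "T = {Phi L J h \<sigma>' \<eta>' | \<sigma>' \<eta>'. \<sigma>' \<in> {\<sigma>} \<and> \<eta>' \<in> Iset L J h \<sigma>}"
  note TF = PhiSet_facts[OF s, of J h, folded T_def]
  have "Phi L J h \<sigma> ?\<eta> \<le> Max (Ham L J h ` set [\<sigma>, ?\<eta>])"
    using Phi_props(3)[OF s e path2[OF x]] .
  also have "\<dots> = Ham L J h \<sigma>" using lt by simp
  finally have "Phi L J h \<sigma> ?\<eta> = Ham L J h \<sigma>" using Phi_props(2)[OF s e, of J h] by simp
  moreover have "Phi L J h \<sigma> ?\<eta> \<in> T" unfolding T_def using eI by blast
  ultimately have "Min T = Ham L J h \<sigma>" using TF by (metis Min_eqI)
  then have "PhiSet L J h {\<sigma>} (Iset L J h \<sigma>) = Ham L J h \<sigma>" by (simp add: PhiSet_def T_def)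
  then have "stab L J h \<sigma> = 0" using eI by (auto simp: stab_def zero_ereal_def)
  then show ?thesis by (simp add: Xabove_def)
qed

lemma stab_le:
  assumes s: "\<sigma> \<in> Xs L" and x: "x \<in> Lam L" and z: "z \<in> Lam L"
    and c1: "Ham L J h (flip \<sigma> x) \<le> Ham L J h \<sigma> + (J - h)"
    and lt: "Ham L J h (flip (flip \<sigma> x) z) < Ham L J h \<sigma>" and Jh: "h \<le> J"
  shows "stab L J h \<sigma> \<le> ereal (J - h) \<and> \<sigma> \<notin> Xabove L J h (J - h)"
proof -
  let ?\<eta> = "flip (flip \<sigma> x) z"
  have e: "?\<eta> \<in> Xs L" using flip_Xs[OF flip_Xs[OF s x] z] .
  then have eI: "?\<eta> \<in> Iset L J h \<sigma>" using lt by (simp add: Iset_def)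
  define T where "T = {Phi L J h \<sigma>' \<eta>' | \<sigma>' \<eta>'. \<sigma>' \<in> {\<sigma>} \<and> \<eta>' \<in> Iset L J h \<sigma>}"
  note TF = PhiSet_facts[OF s, of J h, folded T_def]
  have "Phi L J h \<sigma> ?\<eta> \<le> Max (Ham L J h ` set [\<sigma>, flip \<sigma> x, ?\<eta>])"
    using Phi_props(3)[OF s e path3[OF x z]] .
  also have "\<dots> \<le> Ham L J h \<sigma> + (J - h)" using lt c1 Jh by simp
  finally have 1: "Phi L J h \<sigma> ?\<eta> \<le> Ham L J h \<sigma> + (J - h)" .
  have "Phi L J h \<sigma> ?\<eta> \<in> T" unfolding T_def using eI by blast
  then have "Min T \<le> Ham L J h \<sigma> + (J - h)" using TF 1 by (meson Min_le order.trans)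
  then have "PhiSet L J h {\<sigma>} (Iset L J h \<sigma>) \<le> Ham L J h \<sigma> + (J - h)" by (simp add: PhiSet_def T_def)
  then have "stab L J h \<sigma> \<le> ereal (J - h)" using eI by (auto simp: stab_def)
  then show ?thesis by (auto simp: Xabove_def)
qed



lemma comp_plus:
  assumes "C \<in> components L \<sigma>" "y \<in> C" shows "y \<in> plus_sites L \<sigma>"
proof -
  obtain x0 where x0: "x0 \<in> plus_sites L \<sigma>" "C = {y. (x0, y) \<in> (touch_rel L \<sigma>)\<^sup>*}"
    using assms(1) by (auto simp: components_def)
  then have "(x0, y) \<in> (touch_rel L \<sigma>)\<^sup>*" using assms(2) by simp
  then show ?thesis using x0(1) by (cases rule: rtranclE) (auto simp: touch_rel_def)
qed

lemma comp_closed: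
  assumes "C \<in> components L \<sigma>" "y \<in> C" "z \<in> plus_sites L \<sigma>"
    "face_verts L y \<inter> face_verts L z \<noteq> {}"
  shows "z \<in> C"
proof -
  obtain x0 where x0: "x0 \<in> plus_sites L \<sigma>" "C = {y. (x0, y) \<in> (touch_rel L \<sigma>)\<^sup>*}"
    using assms(1) by (auto simp: components_def)
  have "(y, z) \<in> touch_rel L \<sigma>" using comp_plus[OF assms(1,2)] assms(3,4) by (simp add: touch_rel_def)
  then show ?thesis using assms(2) x0(2) by (auto intro: rtrancl_into_rtrancl)
qed

lemma mod6_ne: "(j'::nat) < j \<Longrightarrow> j < 6 \<Longrightarrow> (s+j') mod 6 = (s+j) mod 6 \<Longrightarrow> False"
proof -
  assume a: "j' < j" "j < 6" "(s+j') mod 6 = (s+j) mod 6"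
  then have "6 dvd (s+j) - (s+j')" using mod_eq_dvd_iff_nat[of "s+j'" "s+j" 6] by simp
  then have "6 dvd j - j'" by simp
  then have "6 \<le> j - j'" using a by (intro dvd_imp_le) auto
  then show False using a by simp
qed

lemma angle_info:
  assumes "has_angle L C v k"
  shows "v \<in> Verts L" "1 \<le> k" "k \<le> 5"
    "\<exists>s<6. (\<forall>j<k. face_around L v ((s+j) mod 6) \<in> C) \<and>
       (\<forall>j. k \<le> j \<and> j < 6 \<longrightarrow> face_around L v ((s+j) mod 6) \<notin> C)"
proof -
  define S where "S = {i \<in> {0..<6}. face_around L v i \<in> C}"
  show "v \<in> Verts L" "1 \<le> k" "k \<le> 5" using assms by (auto simp: has_angle_def)
  obtain s where s: "s < 6" "S = (\<lambda>j. (s + j) mod 6) ` {0..<k}"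
    using assms unfolding has_angle_def Let_def S_def by blast
  have 1: "\<forall>j<k. face_around L v ((s+j) mod 6) \<in> C"
  proof (intro allI impI)
    fix j assume "j < k"
    then have "(s+j) mod 6 \<in> S" using s by auto
    then show "face_around L v ((s+j) mod 6) \<in> C" by (simp add: S_def)
  qed
  have 2: "\<forall>j. k \<le> j \<and> j < 6 \<longrightarrow> face_around L v ((s+j) mod 6) \<notin> C"
  proof (intro allI impI notI)
    fix j assume j: "k \<le> j \<and> j < 6" and "face_around L v ((s+j) mod 6) \<in> C"
    then have "(s+j) mod 6 \<in> S" by (simp add: S_def)
    then obtain j' where "j' < k" "(s+j') mod 6 = (s+j) mod 6" using s by auto
    then show False using j mod6_ne by force
  qed
  show "\<exists>s<6. (\<forall>j<k. face_around L v ((s+j) mod 6) \<in> C) \<and>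
       (\<forall>j. k \<le> j \<and> j < 6 \<longrightarrow> face_around L v ((s+j) mod 6) \<notin> C)"
    using s(1) 1 2 by blast
qed

lemma minus_face:
  assumes L: "L \<ge> 1" and s: "\<sigma> \<in> Xs L" and C: "C \<in> components L \<sigma>" and v: "v \<in> Verts L"
    and i: "i < 6" and j: "j < 6" and inC: "face_around L v j \<in> C" and nC: "face_around L v i \<notin> C"
  shows "\<sigma> (face_around L v i) = -1"
proof (rule ccontr)
  assume a: "\<sigma> (face_around L v i) \<noteq> -1"
  have lam: "face_around L v i \<in> Lam L" using fa_Lam[OF L i] .
  then have "\<sigma> (face_around L v i) = 1" using a s unfolding Xs_def by blast
  then have "face_around L v i \<in> plus_sites L \<sigma>" using lam by (simp add: plus_sites_def)
  moreover have "face_verts L (face_around L v j) \<inter> face_verts L (face_around L v i) \<noteq> {}"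
    using fa_vert[OF v i] fa_vert[OF v j] by blast
  ultimately show False using comp_closed[OF C inC] nC by blast
qed

lemma plus_face:
  assumes "C \<in> components L \<sigma>" "y \<in> C" shows "\<sigma> y = 1"
  using comp_plus[OF assms] by (simp add: plus_sites_def)

lemma pm1_nbrs: "L \<ge> 1 \<Longrightarrow> \<sigma> \<in> Xs L \<Longrightarrow> \<forall>y\<in>nbrs L x. \<sigma> y = 1 \<or> \<sigma> y = -1"
  using nbrs_Lam unfolding Xs_def by blast

lemma card_nbrs_L1: "card (nbrs 1 x) \<le> 1"
  using nbrs_L1 nbrs_finite by (metis One_nat_def card_le_Suc0_iff_eq)

lemma gain_minus:
  assumes L: "L \<ge> 1" and s: "\<sigma> \<in> Xs L" and x: "x \<in> Lam L" and sx: "\<sigma> x = -1"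
    and p: "p1 \<in> nbrs L x" "p2 \<in> nbrs L x" "\<sigma> p1 = 1" "\<sigma> p2 = 1"
    and eq: "p1 = p2 \<Longrightarrow> L = 1" and J: "0 \<le> J"
  shows "Ham L J h (flip \<sigma> x) \<le> Ham L J h \<sigma> - J - h"
proof -
  let ?S = "\<Sum>y\<in>nbrs L x. real_of_int (\<sigma> y)"
  have pm: "\<forall>y\<in>nbrs L x. \<sigma> y = 1 \<or> \<sigma> y = -1" using pm1_nbrs[OF L s] .
  have "?S \<ge> 1"
  proof (cases "p1 = p2")
    case True
    then have "L = 1" using eq by simp
    then have c: "card (nbrs L x) \<le> 1" using card_nbrs_L1 by simp
    have "?S \<ge> 2 * real (card {p1}) - real (card (nbrs L x))"
      using p pm by (intro sum_lower[OF nbrs_finite]) auto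
    then show ?thesis using c by simp
  next
    case False
    have "?S \<ge> 2 * real (card {p1,p2}) - real (card (nbrs L x))"
      using p pm by (intro sum_lower[OF nbrs_finite]) auto
    then show ?thesis using False card_nbrs[of L x] by simp
  qed
  then have "J * 1 \<le> J * ?S" using J by (rule mult_left_mono)
  then have "J * ?S \<ge> J" by simp
  then show ?thesis using Ham_flip[OF L x, of J h \<sigma>] sx by simp
qed

lemma gain_plus:
  assumes L: "L \<ge> 1" and s: "\<sigma> \<in> Xs L" and x: "x \<in> Lam L" and sx: "\<sigma> x = 1"
    and p: "p1 \<in> nbrs L x" "p2 \<in> nbrs L x" "\<sigma> p1 = -1" "\<sigma> p2 = -1"
    and eq: "p1 = p2 \<Longrightarrow> L = 1" and J: "0 \<le> J"
  shows "Ham L J h (flip \<sigma> x) \<le> Ham L J h \<sigma> - J + h"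
proof -
  let ?S = "\<Sum>y\<in>nbrs L x. real_of_int (\<sigma> y)"
  have pm: "\<forall>y\<in>nbrs L x. \<sigma> y = 1 \<or> \<sigma> y = -1" using pm1_nbrs[OF L s] .
  have "?S \<le> -1"
  proof (cases "p1 = p2")
    case True
    then have "L = 1" using eq by simp
    then have c: "card (nbrs L x) \<le> 1" using card_nbrs_L1 by simp
    have "?S \<le> real (card (nbrs L x)) - 2 * real (card {p1})"
      using p pm by (intro sum_upper[OF nbrs_finite]) auto
    then show ?thesis using c by simp
  next
    case False
    have "?S \<le> real (card (nbrs L x)) - 2 * real (card {p1,p2})"
      using p pm by (intro sum_upper[OF nbrs_finite]) auto
    then show ?thesis using False card_nbrs[of L x] by simp
  qed
  then have "J * ?S \<le> J * (-1)" using J by (rule mult_left_mono)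
  then have "J * ?S \<le> - J" by simp
  then show ?thesis using Ham_flip[OF L x, of J h \<sigma>] sx by simp
qed

lemma cost_minus:
  assumes L: "L \<ge> 1" and s: "\<sigma> \<in> Xs L" and x: "x \<in> Lam L" and sx: "\<sigma> x = -1"
    and p: "p1 \<in> nbrs L x" "\<sigma> p1 = 1" and J: "0 \<le> J"
  shows "Ham L J h (flip \<sigma> x) \<le> Ham L J h \<sigma> + J - h"
proof -
  let ?S = "\<Sum>y\<in>nbrs L x. real_of_int (\<sigma> y)"
  have pm: "\<forall>y\<in>nbrs L x. \<sigma> y = 1 \<or> \<sigma> y = -1" using pm1_nbrs[OF L s] .
  have "?S \<ge> 2 * real (card {p1}) - real (card (nbrs L x))"
    using p pm by (intro sum_lower[OF nbrs_finite]) auto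
  then have "?S \<ge> -1" using card_nbrs[of L x] by simp
  then have "J * (-1) \<le> J * ?S" using J by (rule mult_left_mono)
  then have "J * ?S \<ge> - J" by simp
  then show ?thesis using Ham_flip[OF L x, of J h \<sigma>] sx by simp
qed



lemma c6: "(i::nat) < 6 \<Longrightarrow> i = 0 \<or> i = 1 \<or> i = 2 \<or> i = 3 \<or> i = 4 \<or> i = 5"
  by auto
lemma idx: "(s::nat) < 6 \<Longrightarrow> ((s+4) mod 6 + 1) mod 6 = (s+5) mod 6 \<and> ((s+5) mod 6 + 1) mod 6 = s
  \<and> ((s+4) mod 6 + 2) mod 6 = s \<and> ((s+5) mod 6 + 2) mod 6 = (s+1) mod 6
  \<and> ((s+3) mod 6 + 1) mod 6 = (s+4) mod 6 \<and> (s + 0) mod 6 = s"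
  by (drule c6) auto

lemma idx2: "(s::nat) < 6 \<Longrightarrow> ((s+4) mod 6 + 1) mod 6 = (s+5) mod 6" "(s::nat) < 6 \<Longrightarrow> ((s+5) mod 6 + 1) mod 6 = s"
  "(s::nat) < 6 \<Longrightarrow> ((s+4) mod 6 + 2) mod 6 = s" "(s::nat) < 6 \<Longrightarrow> ((s+5) mod 6 + 2) mod 6 = (s+1) mod 6"
  "(s::nat) < 6 \<Longrightarrow> ((s+3) mod 6 + 1) mod 6 = (s+4) mod 6" "(s::nat) < 6 \<Longrightarrow> (s + 0) mod 6 = s"
  using idx by auto

lemma part1:
  assumes L: "L \<ge> 1" and h: "0 < h" "h < J" and s: "\<sigma> \<in> Xs L"
    and C: "C \<in> components L \<sigma>" and ang: "has_angle L C v 5 \<or> has_angle L C v 1"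
  shows "stab L J h \<sigma> = 0 \<and> \<sigma> \<notin> Xabove L J h 0"
proof -
  let ?f = "face_around L v"
  have J0: "0 \<le> J" using h by simp
  have m6: "\<And>n. n mod 6 < (6::nat)" by simp
  show ?thesis
  proof (cases "has_angle L C v 5")
    case True
    note ai = angle_info[OF True]
    obtain t where t: "t < 6" "\<forall>j<5. ?f ((t+j) mod 6) \<in> C" "\<forall>j. 5 \<le> j \<and> j < 6 \<longrightarrow> ?f ((t+j) mod 6) \<notin> C"
      using ai(4) by blast
    note I = idx2[OF t(1)]
    let ?x = "?f ((t+5) mod 6)"
    have inC0: "?f t \<in> C" using t(2)[rule_format, of 0] I(6) by simp
    have inC4: "?f ((t+4) mod 6) \<in> C" using t(2) by simp
    have nC: "?x \<notin> C" using t(3) by simp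
    have sx: "\<sigma> ?x = -1" using minus_face[OF L s C ai(1) m6 t(1) inC0 nC] .
    have p1: "?f ((t+4) mod 6) \<in> nbrs L ?x" using fa_adj[OF m6[of "t+4"], of L v, unfolded I(1)] by blast
    have p2: "?f t \<in> nbrs L ?x" using fa_adj[OF m6[of "t+5"], of L v, unfolded I(2)] by blast
    have eq: "?f ((t+4) mod 6) = ?f t \<Longrightarrow> L = 1" using fa_dist2[OF m6[of "t+4"], of L v, unfolded I(3)] .
    have "Ham L J h (flip \<sigma> ?x) \<le> Ham L J h \<sigma> - J - h"
      by (rule gain_minus[OF L s fa_Lam[OF L m6] sx p1 p2 plus_face[OF C inC4] plus_face[OF C inC0] eq J0])
    then have "Ham L J h (flip \<sigma> ?x) < Ham L J h \<sigma>" using h by simp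
    then show ?thesis using stab_zero[OF s fa_Lam[OF L m6]] by blast
  next
    case False
    then have A: "has_angle L C v 1" using ang by simp
    note ai = angle_info[OF A]
    obtain t where t: "t < 6" "\<forall>j<1. ?f ((t+j) mod 6) \<in> C" "\<forall>j. 1 \<le> j \<and> j < 6 \<longrightarrow> ?f ((t+j) mod 6) \<notin> C"
      using ai(4) by blast
    note I = idx2[OF t(1)]
    have inC0: "?f t \<in> C" using t(2)[rule_format, of 0] I(6) by simp
    have nC5: "?f ((t+5) mod 6) \<notin> C" using t(3) by simp
    have nC1: "?f ((t+1) mod 6) \<notin> C" using t(3)[rule_format, of 1] by simp
    have s5: "\<sigma> (?f ((t+5) mod 6)) = -1" using minus_face[OF L s C ai(1) m6 t(1) inC0 nC5] .
    have s1: "\<sigma> (?f ((t+1) mod 6)) = -1" using minus_face[OF L s C ai(1) m6 t(1) inC0 nC1] .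
    have p1: "?f ((t+5) mod 6) \<in> nbrs L (?f t)" using fa_adj[OF m6[of "t+5"], of L v, unfolded I(2)] by blast
    have p2: "?f ((t+1) mod 6) \<in> nbrs L (?f t)" using fa_adj[OF t(1), of L v] by simp
    have eq: "?f ((t+5) mod 6) = ?f ((t+1) mod 6) \<Longrightarrow> L = 1" using fa_dist2[OF m6[of "t+5"], of L v, unfolded I(4)] .
    have "Ham L J h (flip \<sigma> (?f t)) \<le> Ham L J h \<sigma> - J + h"
      by (rule gain_plus[OF L s fa_Lam[OF L t(1)] plus_face[OF C inC0] p1 p2 s5 s1 eq J0])
    then have "Ham L J h (flip \<sigma> (?f t)) < Ham L J h \<sigma>" using h by simp
    then show ?thesis using stab_zero[OF s fa_Lam[OF L t(1)]] by blast
  qed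
qed

lemma part2:
  assumes L: "L \<ge> 1" and h: "0 < h" "h < J" and s: "\<sigma> \<in> Xs L"
    and C: "C \<in> components L \<sigma>" and ang: "has_angle L C v 4"
  shows "stab L J h \<sigma> \<le> ereal (J - h) \<and> \<sigma> \<notin> Xabove L J h (J - h)"
proof -
  let ?f = "face_around L v"
  have J0: "0 \<le> J" using h by simp
  have m6: "\<And>n. n mod 6 < (6::nat)" by simp
  note ai = angle_info[OF ang]
  obtain t where t: "t < 6" "\<forall>j<4. ?f ((t+j) mod 6) \<in> C" "\<forall>j. 4 \<le> j \<and> j < 6 \<longrightarrow> ?f ((t+j) mod 6) \<notin> C"
    using ai(4) by blast
  note I = idx2[OF t(1)]
  let ?y = "?f ((t+4) mod 6)" and ?z = "?f ((t+5) mod 6)"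
  have inC0: "?f t \<in> C" using t(2)[rule_format, of 0] I(6) by simp
  have inC3: "?f ((t+3) mod 6) \<in> C" using t(2) by simp
  have nCy: "?y \<notin> C" using t(3) by simp
  have nCz: "?z \<notin> C" using t(3) by simp
  have sy: "\<sigma> ?y = -1" using minus_face[OF L s C ai(1) m6 t(1) inC0 nCy] .
  have sz: "\<sigma> ?z = -1" using minus_face[OF L s C ai(1) m6 t(1) inC0 nCz] .
  have py: "?f ((t+3) mod 6) \<in> nbrs L ?y" using fa_adj[OF m6[of "t+3"], of L v, unfolded I(5)] by blast
  have yL: "?y \<in> Lam L" and zL: "?z \<in> Lam L" using fa_Lam[OF L m6] by auto
  define \<sigma>' where "\<sigma>' = flip \<sigma> ?y"
  have c1: "Ham L J h \<sigma>' \<le> Ham L J h \<sigma> + J - h"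
    unfolding \<sigma>'_def by (rule cost_minus[OF L s yL sy py plus_face[OF C inC3] J0])
  have s': "\<sigma>' \<in> Xs L" unfolding \<sigma>'_def using flip_Xs[OF s yL] .
  have zy: "?z \<in> nbrs L ?y" and yz: "?y \<in> nbrs L ?z" using fa_adj[OF m6[of "t+4"], of L v, unfolded I(1)] by blast+
  have z0: "?f t \<in> nbrs L ?z" using fa_adj[OF m6[of "t+5"], of L v, unfolded I(2)] by blast
  have zney: "?z \<noteq> ?y" using nbrs_not_self[OF zy] .
  have ne0: "?f t \<noteq> ?y" using inC0 nCy by auto
  have s'z: "\<sigma>' ?z = -1" using sz zney by (simp add: \<sigma>'_def flip_def)
  have s'y: "\<sigma>' ?y = 1" using sy by (simp add: \<sigma>'_def flip_def)
  have s'0: "\<sigma>' (?f t) = 1" using plus_face[OF C inC0] ne0 by (simp add: \<sigma>'_def flip_def)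
  have "Ham L J h (flip \<sigma>' ?z) \<le> Ham L J h \<sigma>' - J - h"
    by (rule gain_minus[OF L s' zL s'z yz z0 s'y s'0 _ J0]) (use ne0 in auto)
  then have lt: "Ham L J h (flip \<sigma>' ?z) < Ham L J h \<sigma>" using c1 h by simp
  show ?thesis using stab_le[OF s yL zL _ lt[unfolded \<sigma>'_def]] c1 h unfolding \<sigma>'_def by simp
qed

theorem lemma4p2:
  fixes L :: nat and J h :: real and \<sigma> :: config
  assumes "L \<ge> 1" and "0 < h" and "h < J" and "\<sigma> \<in> Xs L"
  shows "((\<exists>C\<in>components L \<sigma>. \<exists>v. has_angle L C v 5 \<or> has_angle L C v 1) \<longrightarrow>
            stab L J h \<sigma> = 0 \<and> \<sigma> \<notin> Xabove L J h 0)
       \<and> ((\<exists>C\<in>components L \<sigma>. \<exists>v. has_angle L C v 4) \<longrightarrow>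
            stab L J h \<sigma> \<le> ereal (J - h) \<and> \<sigma> \<notin> Xabove L J h (J - h))"
  using part1[OF assms] part2[OF assms] by blast

end
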